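(* Let $\mathscr T$ be a functor satisfying (T1)–(T4) and $\mathcal M=(M,\le,{}^\perp)$ a complete orthomodular lattice, and put $L_{\mathcal M}=\mathscr T(\mathbf{Lin}(\mathcal M))$. Then $\mathscr P(L_{\mathcal M})=(\mathscr P(L_{\mathcal M}),\bigcup,\odot,{}^*,{\sim},\{\mathrm{id}_M\})$ is a $\mathscr T$-based orthomodular dynamic algebra.
   Context: An involutive unital quantale is $(Q,\bigsqcup,\odot,{}^*,e)$: complete join-semilattice $Q$, associative $\odot$ distributing over arbitrary joins in each argument, unit $e$, ${}^*$ with $x^{**}=x$, $(x\odot y)^*=y^*\odot x^*$, $(\bigsqcup x_i)^*=\bigsqcup x_i^*$. An involutive generalized dynamic algebra (IDA) is such a quantale with ${\sim}\colon K\to K$ satisfying, for all $x,y$ and families $(x_i)$: ${\sim}(x\odot{\sim}{\sim}y)={\sim}(x\odot y)$; ${\sim}(\bigsqcup{\sim}{\sim}x_i)={\sim}(\bigsqcup x_i)$; $({\sim}x)^*={\sim}x$; ${\sim}{\sim}({\sim}{\sim}x\odot y)={\sim}({\sim}x\sqcup{\sim}({\sim}x\sqcup y))$. Test set $\widetilde K=\{{\sim}k\}$; $\bigvee W={\sim}{\sim}\bigsqcup W$; $w^\perp={\sim}w$; $k\preceq l$ iff $\bigvee\{k,l\}=l$; $k\bullet v={\sim}{\sim}(k\odot v)$; $k\equiv l$ iff $k\bullet w=l\bullet w$ for all $w\in\widetilde K$. IDA morphisms preserve arbitrary joins, $\odot$, ${}^*$, unit, ${\sim}$ (category $\mathbb{IDA}$);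 semi-Foulis means $(\widetilde K,\preceq,{}^\perp)$ is a complete orthomodular lattice. $\mathbb{IM}$: involutive monoids and homomorphisms. For a complete orthomodular lattice $\mathcal M$: $\pi_m(x)=m\wedge(m^\perp\vee x)$; $\mathbf{Lin}(\mathcal M)$ is the set of maps $f$ admitting $f^*$ with $f(x)\le y^\perp\iff x\le f^*(y)^\perp$, an IDA under pointwise joins, composition, ${}^*$, $\mathrm{id}$, ${\sim}f=\pi_{f(1)^\perp}$, with test set $\{\pi_m\mid m\in M\}$. For an involutive submonoid $L\supseteq\{\pi_m\}$, $\mathscr P(L)$ is the IDA of subsets of $L$ with union, $A\odot B=\{a\circ b\mid a\in A,b\in B\}$, $A^*=\{a^*\mid a\in A\}$, unit $\{\mathrm{id}_M\}$, ${\sim}A=\{\pi_{(\bigvee_{a\in A}a(1))^\perp}\}$. $\mathscr T\colon\mathbb{IDA}\to\mathbb{IM}$ satisfies: (T1) $\widetilde K\subseteq\mathscr T(K)\subseteq K$, $\mathscr T(K)$ an involutive submonoid of $(K,\odot,{}^*,e)$; (T2) for semi-Foulis $\mathfrak K$ with $s=t\iff s\equiv t$ on $\mathscr T(K)$, $k\mapsto k\bullet(-)$ is an isomorphism $\mathscr T(\mathfrak K)\to\mathscr T(\mathbf{Lin}(\widetilde{\mathfrak K}))$; (T3) $f\mapsto\{f\}$ is an isomorphism $\mathscr T(\mathbf{Lin}(\mathcal M))\to\mathscr T(\mathscr P(\mathscr T(\mathbf{Lin}(\mathcal M))))$ for every complete orthomodular lattice $\mathcal M$; (T4) $\mathscr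 T(f)$ is the restriction of $f$. A $\mathscr T$-based orthomodular dynamic algebra is an IDA with: (TODA1) $(\widetilde K,\preceq,{}^\perp)$ a complete orthomodular lattice; (TODA2) every $A$ with $\mathscr T(K)\subseteq A\subseteq K$ closed under $\odot$, ${}^*$, arbitrary joins equals $K$; (TODA3) for $S,T\subseteq\mathscr T(K)$, $\bigsqcup S=\bigsqcup T$ iff $S=T$; (TODA4) for $s,t\in\mathscr T(K)$, $s=t$ iff $s\equiv t$. *)

theory Defs
  imports "HOL-Library.FuncSet"
begin

definition is_lub :: "'a set \<Rightarrow> ('a \<Rightarrow> 'a \<Rightarrow> bool) \<Rightarrow> 'a set \<Rightarrow> 'a \<Rightarrow> bool" where
  "is_lub A le B s \<longleftrightarrow> s \<in> A \<and> (\<forall>b\<in>B. le b s) \<and> (\<forall>x\<in>A. (\<forall>b\<in>B. le b x) \<longrightarrow> le s x)"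

definition is_glb :: "'a set \<Rightarrow> ('a \<Rightarrow> 'a \<Rightarrow> bool) \<Rightarrow> 'a set \<Rightarrow> 'a \<Rightarrow> bool" where
  "is_glb A le B s \<longleftrightarrow> s \<in> A \<and> (\<forall>b\<in>B. le s b) \<and> (\<forall>x\<in>A. (\<forall>b\<in>B. le x b) \<longrightarrow> le x s)"

definition lsup :: "'a set \<Rightarrow> ('a \<Rightarrow> 'a \<Rightarrow> bool) \<Rightarrow> 'a set \<Rightarrow> 'a" where
  "lsup A le B = (THE s. is_lub A le B s)"

definition linf :: "'a set \<Rightarrow> ('a \<Rightarrow> 'a \<Rightarrow> bool) \<Rightarrow> 'a set \<Rightarrow> 'a" where
  "linf A le B = (THE s. is_glb A le B s)"

definition complete_oml :: "'a set \<Rightarrow> ('a \<Rightarrow> 'a \<Rightarrow> bool) \<Rightarrow> ('a \<Rightarrow> 'a) \<Rightarrow> bool" where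
  "complete_oml A le p \<longleftrightarrow>
     (\<forall>x\<in>A. le x x) \<and>
     (\<forall>x\<in>A. \<forall>y\<in>A. le x y \<and> le y x \<longrightarrow> x = y) \<and>
     (\<forall>x\<in>A. \<forall>y\<in>A. \<forall>z\<in>A. le x y \<and> le y z \<longrightarrow> le x z) \<and>
     (\<forall>B. B \<subseteq> A \<longrightarrow> (\<exists>s. is_lub A le B s)) \<and>
     (\<forall>x\<in>A. p x \<in> A \<and> p (p x) = x) \<and>
     (\<forall>x\<in>A. \<forall>y\<in>A. le x y \<longrightarrow> le (p y) (p x)) \<and>
     (\<forall>x\<in>A. linf A le {x, p x} = lsup A le {} \<and> lsup A le {x, p x} = lsup A le A) \<and>
     (\<forall>x\<in>A. \<forall>y\<in>A. le x y \<longrightarrow> y = lsup A le {x, linf A le {y, p x}})"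

record 'm ortho =
  ocar :: "'m set"
  ole :: "'m \<Rightarrow> 'm \<Rightarrow> bool"
  operp :: "'m \<Rightarrow> 'm"

abbreviation is_complete_oml :: "'m ortho \<Rightarrow> bool" where
  "is_complete_oml M \<equiv> complete_oml (ocar M) (ole M) (operp M)"

definition ojoin :: "'m ortho \<Rightarrow> 'm set \<Rightarrow> 'm" where
  "ojoin M B = lsup (ocar M) (ole M) B"

definition omeet :: "'m ortho \<Rightarrow> 'm set \<Rightarrow> 'm" where
  "omeet M B = linf (ocar M) (ole M) B"

definition otop :: "'m ortho \<Rightarrow> 'm" where
  "otop M = ojoin M (ocar M)"

record 'a ida =
  kcar :: "'a set"
  kjoin :: "'a set \<Rightarrow> 'a"
  kmult :: "'a \<Rightarrow> 'a \<Rightarrow> 'a"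
  kstar :: "'a \<Rightarrow> 'a"
  kunit :: "'a"
  kneg :: "'a \<Rightarrow> 'a"

definition kle :: "'a ida \<Rightarrow> 'a \<Rightarrow> 'a \<Rightarrow> bool" where
  "kle K x y \<longleftrightarrow> kjoin K {x, y} = y"

definition complete_join_semilattice :: "'a ida \<Rightarrow> bool" where
  "complete_join_semilattice K \<longleftrightarrow>
     (\<forall>x\<in>kcar K. kle K x x) \<and>
     (\<forall>x\<in>kcar K. \<forall>y\<in>kcar K. kle K x y \<and> kle K y x \<longrightarrow> x = y) \<and>
     (\<forall>x\<in>kcar K. \<forall>y\<in>kcar K. \<forall>z\<in>kcar K. kle K x y \<and> kle K y z \<longrightarrow> kle K x z) \<and>
     (\<forall>B. B \<subseteq> kcar K \<longrightarrow> is_lub (kcar K) (kle K) B (kjoin K B))"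

definition involutive_unital_quantale :: "'a ida \<Rightarrow> bool" where
  "involutive_unital_quantale K \<longleftrightarrow>
     complete_join_semilattice K \<and>
     (\<forall>x\<in>kcar K. \<forall>y\<in>kcar K. kmult K x y \<in> kcar K) \<and>
     (\<forall>x\<in>kcar K. \<forall>y\<in>kcar K. \<forall>z\<in>kcar K. kmult K (kmult K x y) z = kmult K x (kmult K y z)) \<and>
     (\<forall>x\<in>kcar K. \<forall>B. B \<subseteq> kcar K \<longrightarrow>
        kmult K x (kjoin K B) = kjoin K ((\<lambda>b. kmult K x b) ` B) \<and>
        kmult K (kjoin K B) x = kjoin K ((\<lambda>b. kmult K b x) ` B)) \<and>
     kunit K \<in> kcar K \<and>
     (\<forall>x\<in>kcar K. kmult K (kunit K) x = x \<and> kmult K x (kunit K) = x) \<and>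
     (\<forall>x\<in>kcar K. kstar K x \<in> kcar K \<and> kstar K (kstar K x) = x) \<and>
     (\<forall>x\<in>kcar K. \<forall>y\<in>kcar K. kstar K (kmult K x y) = kmult K (kstar K y) (kstar K x)) \<and>
     (\<forall>B. B \<subseteq> kcar K \<longrightarrow> kstar K (kjoin K B) = kjoin K (kstar K ` B))"

definition is_ida :: "'a ida \<Rightarrow> bool" where
  "is_ida K \<longleftrightarrow>
     involutive_unital_quantale K \<and>
     (\<forall>x\<in>kcar K. kneg K x \<in> kcar K) \<and>
     (\<forall>x\<in>kcar K. \<forall>y\<in>kcar K.
        kneg K (kmult K x (kneg K (kneg K y))) = kneg K (kmult K x y)) \<and>
     (\<forall>B. B \<subseteq> kcar K \<longrightarrow>
        kneg K (kjoin K ((\<lambda>x. kneg K (kneg K x)) ` B)) = kneg K (kjoin K B)) \<and>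
     (\<forall>x\<in>kcar K. kstar K (kneg K x) = kneg K x) \<and>
     (\<forall>x\<in>kcar K. \<forall>y\<in>kcar K.
        kneg K (kneg K (kmult K (kneg K (kneg K x)) y)) =
        kneg K (kjoin K {kneg K x, kneg K (kjoin K {kneg K x, y})}))"

definition tests :: "'a ida \<Rightarrow> 'a set" where
  "tests K = kneg K ` kcar K"

definition tle :: "'a ida \<Rightarrow> 'a \<Rightarrow> 'a \<Rightarrow> bool" where
  "tle K k l \<longleftrightarrow> kneg K (kneg K (kjoin K {k, l})) = l"

definition bullet :: "'a ida \<Rightarrow> 'a \<Rightarrow> 'a \<Rightarrow> 'a" where
  "bullet K k v = kneg K (kneg K (kmult K k v))"

definition kequiv :: "'a ida \<Rightarrow> 'a \<Rightarrow> 'a \<Rightarrow> bool" where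
  "kequiv K k l \<longleftrightarrow> (\<forall>w\<in>tests K. bullet K k w = bullet K l w)"

definition ida_hom :: "'a ida \<Rightarrow> 'b ida \<Rightarrow> ('a \<Rightarrow> 'b) \<Rightarrow> bool" where
  "ida_hom K K' h \<longleftrightarrow>
     (\<forall>x\<in>kcar K. h x \<in> kcar K') \<and>
     (\<forall>B. B \<subseteq> kcar K \<longrightarrow> h (kjoin K B) = kjoin K' (h ` B)) \<and>
     (\<forall>x\<in>kcar K. \<forall>y\<in>kcar K. h (kmult K x y) = kmult K' (h x) (h y)) \<and>
     (\<forall>x\<in>kcar K. h (kstar K x) = kstar K' (h x)) \<and>
     h (kunit K) = kunit K' \<and>
     (\<forall>x\<in>kcar K. h (kneg K x) = kneg K' (h x))"

definition inv_submonoid :: "'a ida \<Rightarrow> 'a set \<Rightarrow> bool" where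
  "inv_submonoid K S \<longleftrightarrow> S \<subseteq> kcar K \<and> kunit K \<in> S \<and>
     (\<forall>x\<in>S. \<forall>y\<in>S. kmult K x y \<in> S) \<and> (\<forall>x\<in>S. kstar K x \<in> S)"

definition im_iso :: "'a ida \<Rightarrow> 'a set \<Rightarrow> 'b ida \<Rightarrow> 'b set \<Rightarrow> ('a \<Rightarrow> 'b) \<Rightarrow> bool" where
  "im_iso K S K' S' h \<longleftrightarrow> bij_betw h S S' \<and>
     (\<forall>x\<in>S. \<forall>y\<in>S. h (kmult K x y) = kmult K' (h x) (h y)) \<and>
     (\<forall>x\<in>S. h (kstar K x) = kstar K' (h x)) \<and>
     h (kunit K) = kunit K'"

definition T_based_oda :: "('a ida \<Rightarrow> 'a set) \<Rightarrow> 'a ida \<Rightarrow> bool" where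
  "T_based_oda T K \<longleftrightarrow>
     is_ida K \<and>
     complete_oml (tests K) (tle K) (kneg K) \<and>
     (\<forall>A. T K \<subseteq> A \<and> A \<subseteq> kcar K \<and>
          (\<forall>x\<in>A. \<forall>y\<in>A. kmult K x y \<in> A) \<and> (\<forall>x\<in>A. kstar K x \<in> A) \<and>
          (\<forall>B. B \<subseteq> A \<longrightarrow> kjoin K B \<in> A) \<longrightarrow> A = kcar K) \<and>
     (\<forall>S U. S \<subseteq> T K \<and> U \<subseteq> T K \<longrightarrow> (kjoin K S = kjoin K U \<longleftrightarrow> S = U)) \<and>
     (\<forall>s\<in>T K. \<forall>t\<in>T K. s = t \<longleftrightarrow> kequiv K s t)"

text \<open>Maps M \<rightarrow> M are represented extensionally (value undefined off the carrier).\<close>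
definition pi_proj :: "'m ortho \<Rightarrow> 'm \<Rightarrow> ('m \<Rightarrow> 'm)" where
  "pi_proj M m = (\<lambda>x\<in>ocar M. omeet M {m, ojoin M {operp M m, x}})"

definition is_adjoint :: "'m ortho \<Rightarrow> ('m \<Rightarrow> 'm) \<Rightarrow> ('m \<Rightarrow> 'm) \<Rightarrow> bool" where
  "is_adjoint M f g \<longleftrightarrow> g \<in> ocar M \<rightarrow>\<^sub>E ocar M \<and>
     (\<forall>x\<in>ocar M. \<forall>y\<in>ocar M. ole M (f x) (operp M y) \<longleftrightarrow> ole M x (operp M (g y)))"

definition Lin :: "'m ortho \<Rightarrow> ('m \<Rightarrow> 'm) set" where
  "Lin M = {f \<in> ocar M \<rightarrow>\<^sub>E ocar M. \<exists>g. is_adjoint M f g}"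

definition adj :: "'m ortho \<Rightarrow> ('m \<Rightarrow> 'm) \<Rightarrow> ('m \<Rightarrow> 'm)" where
  "adj M f = (THE g. is_adjoint M f g)"

definition idM :: "'m ortho \<Rightarrow> ('m \<Rightarrow> 'm)" where
  "idM M = (\<lambda>x\<in>ocar M. x)"

definition lin_ida :: "'m ortho \<Rightarrow> ('m \<Rightarrow> 'm) ida" where
  "lin_ida M = \<lparr> kcar = Lin M,
     kjoin = (\<lambda>F. \<lambda>x\<in>ocar M. ojoin M ((\<lambda>f. f x) ` F)),
     kmult = (\<lambda>f g. compose (ocar M) f g),
     kstar = adj M,
     kunit = idM M,
     kneg = (\<lambda>f. pi_proj M (operp M (f (otop M)))) \<rparr>"

definition pset_ida :: "'m ortho \<Rightarrow> ('m \<Rightarrow> 'm) set \<Rightarrow> ('m \<Rightarrow> 'm) set ida" where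
  "pset_ida M L = \<lparr> kcar = Pow L,
     kjoin = (\<lambda>\<A>. \<Union>\<A>),
     kmult = (\<lambda>A B. {compose (ocar M) a b | a b. a \<in> A \<and> b \<in> B}),
     kstar = (\<lambda>A. adj M ` A),
     kunit = {idM M},
     kneg = (\<lambda>A. {pi_proj M (operp M (ojoin M ((\<lambda>a. a (otop M)) ` A)))}) \<rparr>"

section \<open>Conditions on the functor T (instances at the relevant types)\<close>

definition T1 :: "('a ida \<Rightarrow> 'a set) \<Rightarrow> bool" where
  "T1 T \<longleftrightarrow> (\<forall>K. is_ida K \<longrightarrow> tests K \<subseteq> T K \<and> inv_submonoid K (T K))"

text \<open>(T4): T(f) is the restriction of f, i.e. f maps T(K) into T(K').\<close>
definition T4 :: "('a ida \<Rightarrow> 'a set) \<Rightarrow> ('b ida \<Rightarrow> 'b set) \<Rightarrow> bool" where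
  "T4 T T' \<longleftrightarrow> (\<forall>K K' h. is_ida K \<and> is_ida K' \<and> ida_hom K K' h \<longrightarrow> h ` T K \<subseteq> T' K')"

definition T3 :: "(('m \<Rightarrow> 'm) ida \<Rightarrow> ('m \<Rightarrow> 'm) set) \<Rightarrow>
                  (('m \<Rightarrow> 'm) set ida \<Rightarrow> ('m \<Rightarrow> 'm) set set) \<Rightarrow> bool" where
  "T3 Ta Tb \<longleftrightarrow> (\<forall>M. is_complete_oml M \<longrightarrow>
     im_iso (lin_ida M) (Ta (lin_ida M)) (pset_ida M (Ta (lin_ida M)))
            (Tb (pset_ida M (Ta (lin_ida M)))) (\<lambda>f. {f}))"

end

theory Submission
  imports Defs
begin


locale coml =
  fixes M :: "'m ortho"
  assumes oml: "is_complete_oml M"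
begin

abbreviation "C \<equiv> ocar M"
abbreviation "le \<equiv> ole M"
abbreviation "p \<equiv> operp M"
abbreviation "J \<equiv> ojoin M"
abbreviation "Mt \<equiv> omeet M"

lemma refl: "x \<in> C \<Longrightarrow> le x x" using oml[unfolded complete_oml_def, THEN conjunct1] by blast
lemma antisym: "x \<in> C \<Longrightarrow> y \<in> C \<Longrightarrow> le x y \<Longrightarrow> le y x \<Longrightarrow> x = y"
  using oml[unfolded complete_oml_def, THEN conjunct2, THEN conjunct1] by blast
lemma trans: "x \<in> C \<Longrightarrow> y \<in> C \<Longrightarrow> z \<in> C \<Longrightarrow> le x y \<Longrightarrow> le y z \<Longrightarrow> le x z"
  using oml[unfolded complete_oml_def, THEN conjunct2, THEN conjunct2, THEN conjunct1] by blast
lemma p_in[simp]: "x \<in> C \<Longrightarrow> p x \<in> C" using oml[unfolded complete_oml_def, THEN conjunct2, THEN conjunct2, THEN conjunct2, THEN conjunct2, THEN conjunct1] by blast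
lemma pp[simp]: "x \<in> C \<Longrightarrow> p (p x) = x" using oml[unfolded complete_oml_def, THEN conjunct2, THEN conjunct2, THEN conjunct2, THEN conjunct2, THEN conjunct1] by blast
lemma p_anti: "x \<in> C \<Longrightarrow> y \<in> C \<Longrightarrow> le x y \<Longrightarrow> le (p y) (p x)"
  using oml[unfolded complete_oml_def, THEN conjunct2, THEN conjunct2, THEN conjunct2, THEN conjunct2, THEN conjunct2, THEN conjunct1] by blast
lemma p_le_iff: "x \<in> C \<Longrightarrow> y \<in> C \<Longrightarrow> le (p x) (p y) \<longleftrightarrow> le y x"
  using p_anti[of "p x" "p y"] p_anti[of y x] by auto
lemma p_swap: "x \<in> C \<Longrightarrow> y \<in> C \<Longrightarrow> le x (p y) \<longleftrightarrow> le y (p x)"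
  using p_le_iff[of "p y" x] by simp

lemma lub_unique: "is_lub C le B s \<Longrightarrow> is_lub C le B t \<Longrightarrow> s = t"
  unfolding is_lub_def by (meson antisym)
lemma glb_unique: "is_glb C le B s \<Longrightarrow> is_glb C le B t \<Longrightarrow> s = t"
  unfolding is_glb_def by (meson antisym)

lemma J_lub: "B \<subseteq> C \<Longrightarrow> is_lub C le B (J B)"
proof -
  assume "B \<subseteq> C"
  then obtain s where s: "is_lub C le B s" using oml[unfolded complete_oml_def, THEN conjunct2, THEN conjunct2, THEN conjunct2, THEN conjunct1] by blast
  have "J B = s" unfolding ojoin_def lsup_def
    using s lub_unique by (intro the_equality) blast+
  with s show ?thesis by simp
qed

lemma J_in[simp]: "B \<subseteq> C \<Longrightarrow> J B \<in> C" using J_lub unfolding is_lub_def by blast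
lemma J_upper: "B \<subseteq> C \<Longrightarrow> b \<in> B \<Longrightarrow> le b (J B)" using J_lub unfolding is_lub_def by blast
lemma J_le_iff: "B \<subseteq> C \<Longrightarrow> z \<in> C \<Longrightarrow> le (J B) z \<longleftrightarrow> (\<forall>b\<in>B. le b z)"
proof -
  assume B: "B \<subseteq> C" and z: "z \<in> C"
  have l: "is_lub C le B (J B)" using J_lub[OF B] .
  show ?thesis
  proof
    assume "le (J B) z" thus "\<forall>b\<in>B. le b z" using l B z J_in[OF B] unfolding is_lub_def by (meson subsetD trans)
  next
    assume "\<forall>b\<in>B. le b z" thus "le (J B) z" using l z unfolding is_lub_def by blast
  qed
qed

lemma glb_ex: "B \<subseteq> C \<Longrightarrow> is_glb C le B (J {x\<in>C. \<forall>b\<in>B. le x b})"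
proof -
  assume B: "B \<subseteq> C"
  let ?L = "{x\<in>C. \<forall>b\<in>B. le x b}"
  have L: "?L \<subseteq> C" by blast
  have a: "J ?L \<in> C" using L by simp
  have b: "\<forall>b\<in>B. le (J ?L) b" using J_le_iff[OF L] B by blast
  have c: "\<forall>x\<in>C. (\<forall>b\<in>B. le x b) \<longrightarrow> le x (J ?L)" using J_upper[OF L] by blast
  show ?thesis unfolding is_glb_def using a b c by blast
qed

lemma Mt_glb: "B \<subseteq> C \<Longrightarrow> is_glb C le B (Mt B)"
proof -
  assume B: "B \<subseteq> C"
  have "Mt B = J {x\<in>C. \<forall>b\<in>B. le x b}" unfolding omeet_def linf_def
    using glb_ex[OF B] glb_unique by (intro the_equality) blast+
  with glb_ex[OF B] show ?thesis by simp
qed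

lemma Mt_in[simp]: "B \<subseteq> C \<Longrightarrow> Mt B \<in> C" using Mt_glb unfolding is_glb_def by blast
lemma le_Mt_iff: "B \<subseteq> C \<Longrightarrow> z \<in> C \<Longrightarrow> le z (Mt B) \<longleftrightarrow> (\<forall>b\<in>B. le z b)"
proof -
  assume B: "B \<subseteq> C" and z: "z \<in> C"
  have l: "is_glb C le B (Mt B)" using Mt_glb[OF B] .
  show ?thesis
  proof
    assume "le z (Mt B)" thus "\<forall>b\<in>B. le z b" using l B z Mt_in[OF B] unfolding is_glb_def by (meson subsetD trans)
  next
    assume "\<forall>b\<in>B. le z b" thus "le z (Mt B)" using l z unfolding is_glb_def by blast
  qed
qed

lemma eq_by_le: "a \<in> C \<Longrightarrow> b \<in> C \<Longrightarrow> (\<And>z. z \<in> C \<Longrightarrow> le a z \<longleftrightarrow> le b z) \<Longrightarrow> a = b"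
  by (meson antisym refl)
lemma eq_by_ge: "a \<in> C \<Longrightarrow> b \<in> C \<Longrightarrow> (\<And>z. z \<in> C \<Longrightarrow> le z a \<longleftrightarrow> le z b) \<Longrightarrow> a = b"
  by (meson antisym refl)

lemma J2_le: "x \<in> C \<Longrightarrow> y \<in> C \<Longrightarrow> z \<in> C \<Longrightarrow> le (J {x,y}) z \<longleftrightarrow> le x z \<and> le y z"
  by (subst J_le_iff) auto
lemma le_Mt2: "x \<in> C \<Longrightarrow> y \<in> C \<Longrightarrow> z \<in> C \<Longrightarrow> le z (Mt {x,y}) \<longleftrightarrow> le z x \<and> le z y"
  by (subst le_Mt_iff) auto
lemma Mt_lower: "B \<subseteq> C \<Longrightarrow> b \<in> B \<Longrightarrow> le (Mt B) b" using Mt_glb unfolding is_glb_def by blast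
lemma J2_in[simp]: "x \<in> C \<Longrightarrow> y \<in> C \<Longrightarrow> J {x,y} \<in> C" by simp
lemma Mt2_in[simp]: "x \<in> C \<Longrightarrow> y \<in> C \<Longrightarrow> Mt {x,y} \<in> C" by simp

lemma p_J: assumes B: "B \<subseteq> C" shows "p (J B) = Mt (p ` B)"
proof (rule eq_by_ge)
  fix z assume z: "z \<in> C"
  have pB: "p ` B \<subseteq> C" using B by auto
  have "le z (p (J B)) \<longleftrightarrow> le (J B) (p z)" using p_swap B z by simp
  also have "\<dots> \<longleftrightarrow> (\<forall>b\<in>B. le b (p z))" using J_le_iff B z by simp
  also have "\<dots> \<longleftrightarrow> (\<forall>b\<in>B. le z (p b))" using p_swap B z by (meson subsetD)
  also have "\<dots> \<longleftrightarrow> le z (Mt (p ` B))" using le_Mt_iff[OF pB z] by simp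
  finally show "le z (p (J B)) \<longleftrightarrow> le z (Mt (p ` B))" .
qed (use B in \<open>auto intro!: Mt_in\<close>)

lemma p_Mt: "B \<subseteq> C \<Longrightarrow> p (Mt B) = J (p ` B)"
proof -
  assume B: "B \<subseteq> C"
  have pB: "p ` B \<subseteq> C" using B by auto
  have "p ` p ` B = B" using B by (force simp: image_image)
  hence "Mt B = p (J (p ` B))" using p_J[OF pB] by simp
  thus ?thesis using pB by simp
qed

lemma p_J2: "x \<in> C \<Longrightarrow> y \<in> C \<Longrightarrow> p (J {x,y}) = Mt {p x, p y}"
  using p_J[of "{x,y}"] by simp
lemma p_Mt2: "x \<in> C \<Longrightarrow> y \<in> C \<Longrightarrow> p (Mt {x,y}) = J {p x, p y}"
  using p_Mt[of "{x,y}"] by simp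

lemma top_in[simp]: "otop M \<in> C" by (simp add: otop_def)
lemma le_top: "x \<in> C \<Longrightarrow> le x (otop M)" by (simp add: otop_def J_upper)
lemma bot_le: "x \<in> C \<Longrightarrow> le (J {}) x" by (simp add: J_le_iff)

lemma J_single: "x \<in> C \<Longrightarrow> J {x} = x"
  by (rule eq_by_le) (auto simp: J_le_iff)
lemma Mt_top: "x \<in> C \<Longrightarrow> Mt {x, otop M} = x"
  by (rule eq_by_ge) (auto simp: le_Mt_iff le_top)
lemma J_top: "x \<in> C \<Longrightarrow> J {x, otop M} = otop M"
  apply (rule eq_by_le) apply (auto simp: J_le_iff le_top) using le_top trans top_in by blast
lemma J2_eq_iff: "x \<in> C \<Longrightarrow> y \<in> C \<Longrightarrow> J {x,y} = y \<longleftrightarrow> le x y"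
proof
  assume x: "x \<in> C" and y: "y \<in> C" and e: "J {x,y} = y"
  show "le x y" using J_upper[of "{x,y}" x] x y e by simp
next
  assume x: "x \<in> C" and y: "y \<in> C" and l: "le x y"
  show "J {x,y} = y" by (rule eq_by_le) (use x y l in \<open>auto simp: J2_le intro: trans\<close>)
qed

lemma orthomod: "x \<in> C \<Longrightarrow> y \<in> C \<Longrightarrow> le x y \<Longrightarrow> y = J {x, Mt {y, p x}}"
  unfolding ojoin_def omeet_def using oml[unfolded complete_oml_def, THEN conjunct2, THEN conjunct2, THEN conjunct2,
     THEN conjunct2, THEN conjunct2, THEN conjunct2, THEN conjunct2] by blast

lemma orthomod_dual: "a \<in> C \<Longrightarrow> m \<in> C \<Longrightarrow> le a m \<Longrightarrow> a = Mt {m, J {a, p m}}"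
proof -
  assume a: "a \<in> C" and m: "m \<in> C" and am: "le a m"
  have "le (p m) (p a)" using p_anti a m am by blast
  hence "p a = J {p m, Mt {p a, m}}" using orthomod[of "p m" "p a"] a m by simp
  hence "p (p a) = p (J {p m, Mt {p a, m}})" by simp
  also have "\<dots> = Mt {m, p (Mt {p a, m})}" using a m by (simp add: p_J2)
  also have "\<dots> = Mt {m, J {a, p m}}" using a m by (simp add: p_Mt2)
  finally show ?thesis using a by simp
qed

definition "pi m x = Mt {m, J {p m, x}}"

lemma pi_in[simp]: "m \<in> C \<Longrightarrow> x \<in> C \<Longrightarrow> pi m x \<in> C" by (simp add: pi_def)

lemma sasaki:
  assumes m: "m \<in> C" and x: "x \<in> C" and y: "y \<in> C"
  shows "le (pi m x) y \<longleftrightarrow> le x (J {p m, Mt {m, y}})"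
proof
  assume h: "le (pi m x) y"
  have "le (p m) (J {p m, x})" using m x by (simp add: J_upper)
  hence e: "J {p m, x} = J {p m, Mt {J {p m, x}, m}}" using orthomod[of "p m" "J {p m, x}"] m x by simp
  have h1: "le (pi m x) m" "le (pi m x) y" using h m x unfolding pi_def by (auto intro: Mt_lower)
  have "le (Mt {J {p m, x}, m}) (Mt {m, y})"
    using h1 m x y unfolding pi_def by (simp add: le_Mt2 insert_commute)
  moreover have "le (Mt {m, y}) (J {p m, Mt {m, y}})" using m y by (simp add: J_upper)
  ultimately have "le (Mt {J {p m, x}, m}) (J {p m, Mt {m, y}})" using m x y by (meson trans Mt2_in J2_in p_in)
  moreover have "le (p m) (J {p m, Mt {m, y}})" using m y by (simp add: J_upper)
  ultimately have "le (J {p m, Mt {J {p m, x}, m}}) (J {p m, Mt {m, y}})"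
    using m x y by (simp add: J2_le)
  hence "le (J {p m, x}) (J {p m, Mt {m, y}})" using e by simp
  thus "le x (J {p m, Mt {m, y}})" using m x y by (simp add: J2_le)
next
  assume h: "le x (J {p m, Mt {m, y}})"
  have "le (J {p m, x}) (J {p m, Mt {m, y}})" using h m x y by (simp add: J2_le J_upper)
  moreover have "le (pi m x) (J {p m, x})" using m x unfolding pi_def by (auto intro: Mt_lower)
  ultimately have "le (pi m x) (J {p m, Mt {m, y}})" using m x y by (meson trans Mt2_in J2_in p_in pi_in)
  moreover have "le (pi m x) m" using m x unfolding pi_def by (auto intro: Mt_lower)
  ultimately have "le (pi m x) (Mt {m, J {p m, Mt {m, y}}})"
    using m x y by (simp add: le_Mt2)
  also have "Mt {m, J {p m, Mt {m, y}}} = Mt {m, y}"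
  proof -
    have "le (Mt {m, y}) m" using m y by (auto intro: Mt_lower)
    hence "Mt {m, y} = Mt {m, J {Mt {m, y}, p m}}" using orthomod_dual[of "Mt {m, y}" m] m y by simp
    moreover have "{Mt {m, y}, p m} = {p m, Mt {m, y}}" by (rule insert_commute)
    ultimately show ?thesis by simp
  qed
  finally show "le (pi m x) y" using m x y by (auto simp: le_Mt2)
qed

lemma pi_adj:
  assumes m: "m \<in> C" and x: "x \<in> C" and y: "y \<in> C"
  shows "le (pi m x) (p y) \<longleftrightarrow> le x (p (pi m y))"
proof -
  have "p (pi m y) = J {p m, Mt {m, p y}}"
    unfolding pi_def using m y by (simp add: p_Mt2 p_J2)
  thus ?thesis using sasaki[of m x "p y"] m x y by simp
qed

lemma pi_top: "m \<in> C \<Longrightarrow> pi m (otop M) = m"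
  unfolding pi_def by (simp add: J_top Mt_top)

lemma pi_inj: "a \<in> C \<Longrightarrow> b \<in> C \<Longrightarrow> pi a = pi b \<Longrightarrow> a = b"
  by (metis pi_top)

lemma key4: "a \<in> C \<Longrightarrow> b \<in> C \<Longrightarrow> p (J {p a, p (J {p a, b})}) = pi a b"
  unfolding pi_def using p_J2[of "p a" "p (J {p a, b})"] by simp


lemma pi_proj_eq: "pi_proj M m = restrict (pi m) C"
  unfolding pi_proj_def pi_def by simp

lemma ext_eqI: "f \<in> C \<rightarrow>\<^sub>E C \<Longrightarrow> g \<in> C \<rightarrow>\<^sub>E C \<Longrightarrow> (\<And>x. x \<in> C \<Longrightarrow> f x = g x) \<Longrightarrow> f = g"
  by (metis PiE_ext)

lemma adj_sym: "f \<in> C \<rightarrow>\<^sub>E C \<Longrightarrow> is_adjoint M f g \<Longrightarrow> is_adjoint M g f"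
  unfolding is_adjoint_def by (metis PiE_mem p_swap)

lemma adj_uniq: assumes "is_adjoint M f g1" "is_adjoint M f g2" shows "g1 = g2"
proof (rule ext_eqI)
  show "g1 \<in> C \<rightarrow>\<^sub>E C" "g2 \<in> C \<rightarrow>\<^sub>E C" using assms unfolding is_adjoint_def by auto
  fix y assume y: "y \<in> C"
  have g: "g1 y \<in> C" "g2 y \<in> C" using assms y unfolding is_adjoint_def by auto
  have "p (g1 y) = p (g2 y)"
  proof (rule eq_by_ge)
    fix z assume "z \<in> C"
    thus "le z (p (g1 y)) \<longleftrightarrow> le z (p (g2 y))" using assms y unfolding is_adjoint_def by blast
  qed (use g in auto)
  hence "p (p (g1 y)) = p (p (g2 y))" by simp
  thus "g1 y = g2 y" using g by simp
qed

lemma Lin_fun: "f \<in> Lin M \<Longrightarrow> x \<in> C \<Longrightarrow> f x \<in> C" unfolding Lin_def by auto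
lemma Lin_PiE: "f \<in> Lin M \<Longrightarrow> f \<in> C \<rightarrow>\<^sub>E C" unfolding Lin_def by auto

lemma adj_is: "f \<in> Lin M \<Longrightarrow> is_adjoint M f (adj M f)"
proof -
  assume "f \<in> Lin M"
  then obtain g where g: "is_adjoint M f g" unfolding Lin_def by auto
  have "adj M f = g" unfolding adj_def using g adj_uniq by blast
  thus ?thesis using g by simp
qed

lemma adj_char: "f \<in> Lin M \<Longrightarrow> is_adjoint M f g \<Longrightarrow> adj M f = g"
  using adj_is adj_uniq by blast

lemma adj_Lin: "f \<in> Lin M \<Longrightarrow> adj M f \<in> Lin M"
  using adj_is[of f] adj_sym[of f "adj M f"] unfolding Lin_def is_adjoint_def by auto

lemma adj_adj: "f \<in> Lin M \<Longrightarrow> adj M (adj M f) = f"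
  by (meson Lin_PiE adj_Lin adj_char adj_is adj_sym)

lemma adj_le: "f \<in> Lin M \<Longrightarrow> x \<in> C \<Longrightarrow> y \<in> C \<Longrightarrow> le (f x) (p y) \<longleftrightarrow> le x (p (adj M f y))"
  using adj_is unfolding is_adjoint_def by blast

lemma Lin_J: assumes f: "f \<in> Lin M" and B: "B \<subseteq> C" shows "f (J B) = J (f ` B)"
proof (rule eq_by_le)
  have fB: "f ` B \<subseteq> C" using B f Lin_fun by blast
  show "f (J B) \<in> C" using f B Lin_fun by simp
  show "J (f ` B) \<in> C" using fB by simp
  fix z assume z: "z \<in> C"
  have gz: "adj M f (p z) \<in> C" using adj_Lin[OF f] z Lin_fun by simp
  have "le (f (J B)) z \<longleftrightarrow> le (f (J B)) (p (p z))" using z by simp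
  also have "\<dots> \<longleftrightarrow> le (J B) (p (adj M f (p z)))" using adj_le[OF f, of "J B" "p z"] B z by simp
  also have "\<dots> \<longleftrightarrow> (\<forall>b\<in>B. le b (p (adj M f (p z))))" using J_le_iff[OF B] gz by simp
  also have "\<dots> \<longleftrightarrow> (\<forall>b\<in>B. le (f b) (p (p z)))"
  proof -
    have "\<And>b. b \<in> B \<Longrightarrow> le b (p (adj M f (p z))) \<longleftrightarrow> le (f b) (p (p z))"
      using adj_le[OF f] B z by (metis p_in subsetD)
    thus ?thesis by blast
  qed
  also have "\<dots> \<longleftrightarrow> le (J (f ` B)) z" using J_le_iff[OF fB z] z by simp
  finally show "le (f (J B)) z \<longleftrightarrow> le (J (f ` B)) z" .
qed

lemma pi_proj_adj: "m \<in> C \<Longrightarrow> is_adjoint M (pi_proj M m) (pi_proj M m)"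
  unfolding is_adjoint_def pi_proj_eq using pi_adj by auto

lemma pi_proj_Lin: "m \<in> C \<Longrightarrow> pi_proj M m \<in> Lin M"
  unfolding Lin_def using pi_proj_adj[of m] unfolding pi_proj_eq by auto

lemma adj_pi_proj: "m \<in> C \<Longrightarrow> adj M (pi_proj M m) = pi_proj M m"
  using adj_char pi_proj_adj pi_proj_Lin by blast

lemma pi_proj_top: "m \<in> C \<Longrightarrow> pi_proj M m (otop M) = m"
  by (simp add: pi_proj_eq pi_top)

lemma pi_proj_inj: "a \<in> C \<Longrightarrow> b \<in> C \<Longrightarrow> pi_proj M a = pi_proj M b \<Longrightarrow> a = b"
  by (metis pi_proj_top)

lemma compose_adj: assumes f: "f \<in> Lin M" and g: "g \<in> Lin M"
  shows "is_adjoint M (compose C f g) (compose C (adj M g) (adj M f))"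
  unfolding is_adjoint_def
proof (intro conjI ballI)
  show "compose C (adj M g) (adj M f) \<in> C \<rightarrow>\<^sub>E C"
    using adj_Lin[OF f] adj_Lin[OF g] by (auto simp: compose_def Lin_fun)
  fix x y assume x: "x \<in> C" and y: "y \<in> C"
  have "le (f (g x)) (p y) \<longleftrightarrow> le (g x) (p (adj M f y))" using adj_le[OF f] g x y Lin_fun by blast
  also have "\<dots> \<longleftrightarrow> le x (p (adj M g (adj M f y)))" using adj_le[OF g] adj_Lin[OF f] x y Lin_fun by blast
  finally show "le (compose C f g x) (p y) \<longleftrightarrow> le x (p (compose C (adj M g) (adj M f) y))"
    using x y by (simp add: compose_def)
qed

lemma compose_Lin: "f \<in> Lin M \<Longrightarrow> g \<in> Lin M \<Longrightarrow> compose C f g \<in> Lin M"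
  using compose_adj[of f g] unfolding Lin_def by (auto simp: compose_def)

lemma adj_compose: "f \<in> Lin M \<Longrightarrow> g \<in> Lin M \<Longrightarrow> adj M (compose C f g) = compose C (adj M g) (adj M f)"
  using adj_char compose_adj compose_Lin by blast

definition "jn F = (\<lambda>x\<in>C. J ((\<lambda>f. f x) ` F))"

lemma jn_adj: assumes F: "F \<subseteq> Lin M" shows "is_adjoint M (jn F) (jn (adj M ` F))"
  unfolding is_adjoint_def
proof (intro conjI ballI)
  show "jn (adj M ` F) \<in> C \<rightarrow>\<^sub>E C" unfolding jn_def using F adj_Lin Lin_fun by (auto intro!: J_in)
  fix x y assume x: "x \<in> C" and y: "y \<in> C"
  have s1: "(\<lambda>f. f x) ` F \<subseteq> C" using F x Lin_fun by auto
  have s2: "(\<lambda>f. f y) ` (adj M ` F) \<subseteq> C" using F y Lin_fun adj_Lin by auto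
  have "le (J ((\<lambda>f. f x) ` F)) (p y) \<longleftrightarrow> (\<forall>f\<in>F. le (f x) (p y))" using J_le_iff[OF s1] y by simp
  also have "\<dots> \<longleftrightarrow> (\<forall>f\<in>F. le (adj M f y) (p x))" using adj_le F x y p_swap Lin_fun adj_Lin by (meson subsetD)
  also have "\<dots> \<longleftrightarrow> le (J ((\<lambda>f. f y) ` (adj M ` F))) (p x)" using J_le_iff[OF s2] x by simp
  also have "\<dots> \<longleftrightarrow> le x (p (J ((\<lambda>f. f y) ` (adj M ` F))))" using p_swap x s2 by simp
  finally show "le (jn F x) (p y) \<longleftrightarrow> le x (p (jn (adj M ` F) y))" using x y by (simp add: jn_def)
qed

lemma jn_Lin: "F \<subseteq> Lin M \<Longrightarrow> jn F \<in> Lin M"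
  using jn_adj[of F] unfolding Lin_def jn_def using Lin_fun by (auto intro!: J_in)

lemma adj_jn: "F \<subseteq> Lin M \<Longrightarrow> adj M (jn F) = jn (adj M ` F)"
  using adj_char jn_adj jn_Lin by blast

lemma idM_adj: "is_adjoint M (idM M) (idM M)"
  unfolding is_adjoint_def idM_def by auto
lemma idM_Lin: "idM M \<in> Lin M"
  using idM_adj unfolding Lin_def idM_def by auto
lemma adj_idM: "adj M (idM M) = idM M"
  using adj_char idM_adj idM_Lin by blast


lemma lin_simps[simp]: "kcar (lin_ida M) = Lin M" "kjoin (lin_ida M) = jn" "kmult (lin_ida M) = compose C"
  "kstar (lin_ida M) = adj M" "kunit (lin_ida M) = idM M"
  "kneg (lin_ida M) f = pi_proj M (p (f (otop M)))"
  unfolding lin_ida_def jn_def by (auto simp: fun_eq_iff)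

lemma jn2: "jn {f, g} = (\<lambda>x\<in>C. J {f x, g x})" unfolding jn_def by simp

lemma kle_lin: assumes f: "f \<in> Lin M" and g: "g \<in> Lin M"
  shows "kle (lin_ida M) f g \<longleftrightarrow> (\<forall>x\<in>C. le (f x) (g x))"
proof -
  have "kle (lin_ida M) f g \<longleftrightarrow> jn {f, g} = g" unfolding kle_def by simp
  also have "\<dots> \<longleftrightarrow> (\<forall>x\<in>C. J {f x, g x} = g x)"
  proof
    assume e: "jn {f, g} = g"
    show "\<forall>x\<in>C. J {f x, g x} = g x"
    proof
      fix x assume x: "x \<in> C"
      have "jn {f, g} x = g x" using e by simp
      thus "J {f x, g x} = g x" using x by (simp add: jn2)
    qed
  next
    assume h: "\<forall>x\<in>C. J {f x, g x} = g x"
    show "jn {f, g} = g" unfolding jn2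
      by (rule ext_eqI) (use h f g Lin_fun Lin_PiE in auto)
  qed
  also have "\<dots> \<longleftrightarrow> (\<forall>x\<in>C. le (f x) (g x))"
  proof -
    have "\<And>x. x \<in> C \<Longrightarrow> J {f x, g x} = g x \<longleftrightarrow> le (f x) (g x)"
      by (rule J2_eq_iff) (use f g Lin_fun in auto)
    thus ?thesis by blast
  qed
  finally show ?thesis .
qed

lemma lin_cjs: "complete_join_semilattice (lin_ida M)"
  unfolding complete_join_semilattice_def lin_simps
proof (intro conjI ballI allI impI)
  fix x assume "x \<in> Lin M" thus "kle (lin_ida M) x x" by (simp add: kle_lin refl Lin_fun)
next
  fix x y assume x: "x \<in> Lin M" and y: "y \<in> Lin M" and h: "kle (lin_ida M) x y \<and> kle (lin_ida M) y x"
  have h': "\<forall>z\<in>C. le (x z) (y z)" "\<forall>z\<in>C. le (y z) (x z)" using h x y by (simp_all add: kle_lin)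
  show "x = y"
  proof (rule ext_eqI)
    fix z assume z: "z \<in> C"
    show "x z = y z" using h' z Lin_fun[OF x z] Lin_fun[OF y z] antisym by blast
  qed (use x y Lin_PiE in auto)
next
  fix x y z assume x: "x \<in> Lin M" and y: "y \<in> Lin M" and z: "z \<in> Lin M"
    and h: "kle (lin_ida M) x y \<and> kle (lin_ida M) y z"
  have h': "\<forall>w\<in>C. le (x w) (y w)" "\<forall>w\<in>C. le (y w) (z w)" using h x y z by (simp_all add: kle_lin)
  have "\<forall>w\<in>C. le (x w) (z w)"
  proof
    fix w assume w: "w \<in> C"
    show "le (x w) (z w)" using h' w Lin_fun[OF x w] Lin_fun[OF y w] Lin_fun[OF z w] trans by blast
  qed
  thus "kle (lin_ida M) x z" using x z by (simp add: kle_lin)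
next
  fix B assume B: "B \<subseteq> Lin M"
  have jB: "jn B \<in> Lin M" using jn_Lin B by simp
  have s: "\<And>x. x \<in> C \<Longrightarrow> (\<lambda>f. f x) ` B \<subseteq> C" using B Lin_fun by auto
  show "is_lub (Lin M) (kle (lin_ida M)) B (jn B)"
    unfolding is_lub_def
  proof (intro conjI ballI impI)
    show "jn B \<in> Lin M" by (rule jB)
    fix b assume b: "b \<in> B"
    have bL: "b \<in> Lin M" using b B by auto
    have "\<forall>x\<in>C. le (b x) (jn B x)"
    proof
      fix x assume x: "x \<in> C"
      show "le (b x) (jn B x)" using J_upper[OF s[OF x]] b x by (simp add: jn_def)
    qed
    thus "kle (lin_ida M) b (jn B)" using bL jB by (simp add: kle_lin)
  next
    fix h assume h: "h \<in> Lin M" and ub: "\<forall>b\<in>B. kle (lin_ida M) b h"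
    have "\<forall>x\<in>C. le (jn B x) (h x)"
    proof
      fix x assume x: "x \<in> C"
      have "\<forall>b\<in>B. le (b x) (h x)"
      proof
        fix b assume b: "b \<in> B"
        hence "kle (lin_ida M) b h" using ub by blast
        thus "le (b x) (h x)" using b B h x by (simp add: kle_lin subset_iff)
      qed
      thus "le (jn B x) (h x)" using J_le_iff[OF s[OF x]] h x Lin_fun by (simp add: jn_def)
    qed
    thus "kle (lin_ida M) (jn B) h" using jB h by (simp add: kle_lin)
  qed
qed

lemma compose_assoc': "f \<in> Lin M \<Longrightarrow> g \<in> Lin M \<Longrightarrow> h \<in> Lin M \<Longrightarrow>
   compose C (compose C f g) h = compose C f (compose C g h)"
  by (rule ext) (auto simp: compose_def Lin_fun)

lemma compose_jn_left: assumes x: "x \<in> Lin M" and B: "B \<subseteq> Lin M"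
  shows "compose C x (jn B) = jn ((\<lambda>b. compose C x b) ` B)"
proof (rule ext)
  fix y show "compose C x (jn B) y = jn ((\<lambda>b. compose C x b) ` B) y"
  proof (cases "y \<in> C")
    case True
    have s: "(\<lambda>f. f y) ` B \<subseteq> C" using B Lin_fun True by auto
    have "compose C x (jn B) y = x (J ((\<lambda>f. f y) ` B))" using True by (simp add: compose_def jn_def)
    also have "\<dots> = J (x ` (\<lambda>f. f y) ` B)" using Lin_J[OF x s] .
    also have "\<dots> = jn ((\<lambda>b. compose C x b) ` B) y" using True by (simp add: compose_def jn_def image_image)
    finally show ?thesis .
  qed (simp add: compose_def jn_def)
qed

lemma compose_jn_right: assumes x: "x \<in> Lin M" and B: "B \<subseteq> Lin M"
  shows "compose C (jn B) x = jn ((\<lambda>b. compose C b x) ` B)"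
  by (rule ext) (auto simp: compose_def jn_def image_image Lin_fun[OF x])

lemma idM_left: "f \<in> Lin M \<Longrightarrow> compose C (idM M) f = f"
  by (rule ext_eqI) (auto simp: compose_def idM_def Lin_fun Lin_PiE)
lemma idM_right: "f \<in> Lin M \<Longrightarrow> compose C f (idM M) = f"
  by (rule ext_eqI) (auto simp: compose_def idM_def Lin_fun Lin_PiE)

lemma lin_iuq: "involutive_unital_quantale (lin_ida M)"
  unfolding involutive_unital_quantale_def lin_simps
  using lin_cjs compose_Lin compose_assoc' compose_jn_left compose_jn_right idM_Lin idM_left idM_right
    adj_Lin adj_adj adj_compose adj_jn by auto

lemma lin_neg_Lin: "f \<in> Lin M \<Longrightarrow> pi_proj M (p (f (otop M))) \<in> Lin M"
  by (simp add: pi_proj_Lin Lin_fun)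

lemma lin_negneg: "f \<in> Lin M \<Longrightarrow> pi_proj M (p (pi_proj M (p (f (otop M))) (otop M))) = pi_proj M (f (otop M))"
  by (simp add: pi_proj_top Lin_fun)

lemma lin_ida: "is_ida (lin_ida M)"
  unfolding is_ida_def
proof (intro conjI ballI allI impI)
  show "involutive_unital_quantale (lin_ida M)" by (rule lin_iuq)
  fix x assume x: "x \<in> kcar (lin_ida M)"
  hence x': "x \<in> Lin M" by simp
  show "kneg (lin_ida M) x \<in> kcar (lin_ida M)" using x' by (simp add: lin_neg_Lin)
  show "kstar (lin_ida M) (kneg (lin_ida M) x) = kneg (lin_ida M) x"
    using x' by (simp add: adj_pi_proj Lin_fun)
  fix y assume y: "y \<in> kcar (lin_ida M)"
  hence y': "y \<in> Lin M" by simp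
  have xt: "x (otop M) \<in> C" "y (otop M) \<in> C" using x' y' Lin_fun by auto
  show "kneg (lin_ida M) (kmult (lin_ida M) x (kneg (lin_ida M) (kneg (lin_ida M) y))) =
        kneg (lin_ida M) (kmult (lin_ida M) x y)"
    using xt by (simp add: lin_negneg y' compose_def pi_proj_top)
  let ?a = "x (otop M)" and ?b = "y (otop M)"
  have lhs: "kneg (lin_ida M) (kneg (lin_ida M) (kmult (lin_ida M) (kneg (lin_ida M) (kneg (lin_ida M) x)) y))
     = pi_proj M (pi ?a ?b)"
    using xt by (simp add: compose_def pi_proj_top pi_proj_eq pi_top)
  have rhs: "kneg (lin_ida M) (kjoin (lin_ida M) {kneg (lin_ida M) x, kneg (lin_ida M) (kjoin (lin_ida M) {kneg (lin_ida M) x, y})})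
     = pi_proj M (p (J {p ?a, p (J {p ?a, ?b})}))"
    using xt by (simp add: jn2 pi_proj_top)
  show "kneg (lin_ida M) (kneg (lin_ida M) (kmult (lin_ida M) (kneg (lin_ida M) (kneg (lin_ida M) x)) y)) =
        kneg (lin_ida M) (kjoin (lin_ida M) {kneg (lin_ida M) x, kneg (lin_ida M) (kjoin (lin_ida M) {kneg (lin_ida M) x, y})})"
    unfolding lhs rhs using xt by (simp add: key4)
next
  fix B assume B: "B \<subseteq> kcar (lin_ida M)"
  hence B': "B \<subseteq> Lin M" by simp
  have nn: "\<And>x. x \<in> B \<Longrightarrow> kneg (lin_ida M) (kneg (lin_ida M) x) (otop M) = x (otop M)"
  proof -
    fix x assume "x \<in> B"
    hence "x (otop M) \<in> C" using B' Lin_fun[of x "otop M"] by auto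
    thus "kneg (lin_ida M) (kneg (lin_ida M) x) (otop M) = x (otop M)" by (simp add: pi_proj_top)
  qed
  have eq: "(\<lambda>f. f (otop M)) ` (\<lambda>x. kneg (lin_ida M) (kneg (lin_ida M) x)) ` B = (\<lambda>f. f (otop M)) ` B"
    apply (simp only: image_image)
    apply (rule image_cong)
     apply (rule HOL.refl)
    apply (erule nn)
    done
  have e2: "jn ((\<lambda>x. kneg (lin_ida M) (kneg (lin_ida M) x)) ` B) (otop M) = jn B (otop M)"
    unfolding jn_def restrict_apply'[OF top_in] by (rule arg_cong[where f=J, OF eq])
  show "kneg (lin_ida M) (kjoin (lin_ida M) ((\<lambda>x. kneg (lin_ida M) (kneg (lin_ida M) x)) ` B)) =
        kneg (lin_ida M) (kjoin (lin_ida M) B)"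
    unfolding lin_simps(2)
    by (rule HOL.trans[OF lin_simps(6) HOL.trans[OF _ HOL.sym[OF lin_simps(6)]]]) (simp only: e2)
qed

end



lemma ball_img: "(\<forall>y\<in>h ` A. P y) \<longleftrightarrow> (\<forall>x\<in>A. P (h x))" by blast

locale psetL = coml M for M :: "'m ortho" +
  fixes L :: "('m \<Rightarrow> 'm) set"
  assumes L_Lin: "L \<subseteq> Lin M"
    and L_id: "idM M \<in> L"
    and L_comp: "\<And>f g. f \<in> L \<Longrightarrow> g \<in> L \<Longrightarrow> compose (ocar M) f g \<in> L"
    and L_adj: "\<And>f. f \<in> L \<Longrightarrow> adj M f \<in> L"
    and L_pi: "\<And>m. m \<in> ocar M \<Longrightarrow> pi_proj M m \<in> L"
begin

abbreviation "P \<equiv> pset_ida M L"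
definition "sig A = J ((\<lambda>a. a (otop M)) ` A)"

lemma LinI: "f \<in> L \<Longrightarrow> f \<in> Lin M" using L_Lin by blast
lemma Lfun: "f \<in> L \<Longrightarrow> x \<in> C \<Longrightarrow> f x \<in> C" using LinI Lin_fun by blast

lemma P_simps[simp]: "kcar P = Pow L" "kjoin P = Union"
  "kmult P A B = {compose C a b | a b. a \<in> A \<and> b \<in> B}"
  "kstar P A = adj M ` A" "kunit P = {idM M}"
  "kneg P A = {pi_proj M (p (sig A))}"
  unfolding pset_ida_def sig_def by (auto simp: fun_eq_iff)

lemma tops_sub: "A \<subseteq> L \<Longrightarrow> (\<lambda>a. a (otop M)) ` A \<subseteq> C" by (auto intro: Lfun)
lemma sig_in[simp]: "A \<subseteq> L \<Longrightarrow> sig A \<in> C" unfolding sig_def using tops_sub by simp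
lemma sig_le_iff: "A \<subseteq> L \<Longrightarrow> z \<in> C \<Longrightarrow> le (sig A) z \<longleftrightarrow> (\<forall>a\<in>A. le (a (otop M)) z)"
proof -
  assume A: "A \<subseteq> L" and z: "z \<in> C"
  have "le (J ((\<lambda>a. a (otop M)) ` A)) z \<longleftrightarrow> (\<forall>b\<in>(\<lambda>a. a (otop M)) ` A. le b z)"
    by (rule J_le_iff[OF tops_sub[OF A] z])
  thus ?thesis by (simp only: sig_def ball_img)
qed

lemma sig_pi: "m \<in> C \<Longrightarrow> sig {pi_proj M m} = m"
  unfolding sig_def by (simp add: pi_proj_top J_single)

lemma sig_Union: assumes S: "\<And>A. A \<in> S \<Longrightarrow> A \<subseteq> L" shows "sig (\<Union>S) = J (sig ` S)"
proof (rule eq_by_le)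
  have U: "\<Union>S \<subseteq> L" using S by blast
  have sS: "sig ` S \<subseteq> C" using S by auto
  show "sig (\<Union>S) \<in> C" using U by simp
  show "J (sig ` S) \<in> C" using sS by simp
  fix z assume z: "z \<in> C"
  have "le (sig (\<Union>S)) z \<longleftrightarrow> (\<forall>a\<in>\<Union>S. le (a (otop M)) z)" using sig_le_iff[OF U z] .
  also have "\<dots> \<longleftrightarrow> (\<forall>A\<in>S. le (sig A) z)" using sig_le_iff S z by auto
  also have "\<dots> \<longleftrightarrow> le (J (sig ` S)) z" using J_le_iff[OF sS z] by (simp add: ball_img)
  finally show "le (sig (\<Union>S)) z \<longleftrightarrow> le (J (sig ` S)) z" .
qed

lemma sig_Un: "A \<subseteq> L \<Longrightarrow> B \<subseteq> L \<Longrightarrow> sig (A \<union> B) = J {sig A, sig B}"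
  using sig_Union[of "{A, B}"] by auto

lemma mult_sub: "A \<subseteq> L \<Longrightarrow> B \<subseteq> L \<Longrightarrow> {compose C a b | a b. a \<in> A \<and> b \<in> B} \<subseteq> L"
  by (auto intro: L_comp)

lemma sig_mult: assumes A: "A \<subseteq> L" and B: "B \<subseteq> L"
  shows "sig {compose C a b | a b. a \<in> A \<and> b \<in> B} = J ((\<lambda>a. a (sig B)) ` A)"
proof (rule eq_by_le)
  have AB: "{compose C a b | a b. a \<in> A \<and> b \<in> B} \<subseteq> L" using mult_sub A B .
  have s: "(\<lambda>a. a (sig B)) ` A \<subseteq> C" using A Lfun[OF _ sig_in[OF B]] by auto
  show "sig {compose C a b | a b. a \<in> A \<and> b \<in> B} \<in> C" using AB by simp
  show "J ((\<lambda>a. a (sig B)) ` A) \<in> C" using s by simp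
  fix z assume z: "z \<in> C"
  have "le (sig {compose C a b | a b. a \<in> A \<and> b \<in> B}) z \<longleftrightarrow>
        (\<forall>a\<in>A. \<forall>b\<in>B. le (a (b (otop M))) z)"
  proof -
    have "(\<forall>c\<in>{compose C a b | a b. a \<in> A \<and> b \<in> B}. le (c (otop M)) z) \<longleftrightarrow>
          (\<forall>a\<in>A. \<forall>b\<in>B. le (compose C a b (otop M)) z)" by blast
    thus ?thesis using sig_le_iff[OF AB z] by (simp add: compose_def)
  qed
  also have "\<dots> \<longleftrightarrow> (\<forall>a\<in>A. le (a (sig B)) z)"
  proof -
    have "\<And>a. a \<in> A \<Longrightarrow> le (a (sig B)) z \<longleftrightarrow> (\<forall>b\<in>B. le (a (b (otop M))) z)"
    proof -
      fix a assume a: "a \<in> A"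
      have aL: "a \<in> Lin M" using a A by (auto intro: LinI)
      have "a (sig B) = J (a ` (\<lambda>b. b (otop M)) ` B)" unfolding sig_def using Lin_J[OF aL tops_sub[OF B]] .
      also have "\<dots> = J ((\<lambda>b. a (b (otop M))) ` B)" by (simp add: image_image)
      finally have e: "a (sig B) = J ((\<lambda>b. a (b (otop M))) ` B)" .
      have "(\<lambda>b. a (b (otop M))) ` B \<subseteq> C"
      proof
        fix y assume "y \<in> (\<lambda>b. a (b (otop M))) ` B"
        then obtain b where b: "b \<in> B" and y: "y = a (b (otop M))" by blast
        have "b (otop M) \<in> C" using b B Lfun[OF _ top_in] by auto
        thus "y \<in> C" using y a A Lfun by auto
      qed
      from J_le_iff[OF this z] show "le (a (sig B)) z \<longleftrightarrow> (\<forall>b\<in>B. le (a (b (otop M))) z)"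
        unfolding e by (simp add: ball_img)
    qed
    thus ?thesis by blast
  qed
  also have "\<dots> \<longleftrightarrow> le (J ((\<lambda>a. a (sig B)) ` A)) z" using J_le_iff[OF s z] by (simp add: ball_img)
  finally show "le (sig {compose C a b | a b. a \<in> A \<and> b \<in> B}) z \<longleftrightarrow> le (J ((\<lambda>a. a (sig B)) ` A)) z" .
qed

lemma negneg_P: "A \<subseteq> L \<Longrightarrow> kneg P (kneg P A) = {pi_proj M (sig A)}"
  by (simp add: sig_pi)


lemma kle_P: "kle P A B \<longleftrightarrow> A \<subseteq> B" unfolding kle_def by auto

lemma P_cjs: "complete_join_semilattice P"
  unfolding complete_join_semilattice_def kle_P is_lub_def by auto

lemma P_assoc: assumes x: "x \<subseteq> L" and y: "y \<subseteq> L" and z: "z \<subseteq> L"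
  shows "{compose C c d | c d. c \<in> {compose C a b | a b. a \<in> x \<and> b \<in> y} \<and> d \<in> z} =
         {compose C a e | a e. a \<in> x \<and> e \<in> {compose C b d | b d. b \<in> y \<and> d \<in> z}}"
proof -
  have as: "\<And>a b d. a \<in> x \<Longrightarrow> b \<in> y \<Longrightarrow> d \<in> z \<Longrightarrow>
      compose C (compose C a b) d = compose C a (compose C b d)"
    using x y z by (intro compose_assoc') (auto intro: LinI)
  show ?thesis
  proof (intro set_eqI iffI)
    fix u assume "u \<in> {compose C c d | c d. c \<in> {compose C a b | a b. a \<in> x \<and> b \<in> y} \<and> d \<in> z}"
    then obtain a b d where abd: "a \<in> x" "b \<in> y" "d \<in> z" and u: "u = compose C (compose C a b) d" by blast
    have u': "u = compose C a (compose C b d)" using as[OF abd] u by simp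
    have "compose C b d \<in> {compose C b d | b d. b \<in> y \<and> d \<in> z}" using abd by blast
    thus "u \<in> {compose C a e | a e. a \<in> x \<and> e \<in> {compose C b d | b d. b \<in> y \<and> d \<in> z}}"
      using u' abd(1) by blast
  next
    fix u assume "u \<in> {compose C a e | a e. a \<in> x \<and> e \<in> {compose C b d | b d. b \<in> y \<and> d \<in> z}}"
    then obtain a b d where abd: "a \<in> x" "b \<in> y" "d \<in> z" and u: "u = compose C a (compose C b d)" by blast
    have u': "u = compose C (compose C a b) d" using as[OF abd] u by simp
    have "compose C a b \<in> {compose C a b | a b. a \<in> x \<and> b \<in> y}" using abd by blast
    thus "u \<in> {compose C c d | c d. c \<in> {compose C a b | a b. a \<in> x \<and> b \<in> y} \<and> d \<in> z}"
      using u' abd(3) by blast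
  qed
qed

lemma P_unit_l: "x \<subseteq> L \<Longrightarrow> {compose C a b | a b. a \<in> {idM M} \<and> b \<in> x} = x"
proof -
  assume x: "x \<subseteq> L"
  have "\<And>b. b \<in> x \<Longrightarrow> compose C (idM M) b = b" using x by (intro idM_left) (auto intro: LinI)
  thus ?thesis by force
qed
lemma P_unit_r: "x \<subseteq> L \<Longrightarrow> {compose C a b | a b. a \<in> x \<and> b \<in> {idM M}} = x"
proof -
  assume x: "x \<subseteq> L"
  have "\<And>b. b \<in> x \<Longrightarrow> compose C b (idM M) = b" using x by (intro idM_right) (auto intro: LinI)
  thus ?thesis by force
qed

lemma P_star_mult: assumes x: "x \<subseteq> L" and y: "y \<subseteq> L"
  shows "adj M ` {compose C a b | a b. a \<in> x \<and> b \<in> y} = {compose C a b | a b. a \<in> adj M ` y \<and> b \<in> adj M ` x}"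
proof -
  have e: "\<And>a b. a \<in> x \<Longrightarrow> b \<in> y \<Longrightarrow> adj M (compose C a b) = compose C (adj M b) (adj M a)"
    using x y by (intro adj_compose) (auto intro: LinI)
  show ?thesis
  proof (intro set_eqI iffI)
    fix u assume "u \<in> adj M ` {compose C a b | a b. a \<in> x \<and> b \<in> y}"
    then obtain a b where "a \<in> x" "b \<in> y" "u = adj M (compose C a b)" by blast
    thus "u \<in> {compose C a b | a b. a \<in> adj M ` y \<and> b \<in> adj M ` x}" using e by blast
  next
    fix u assume "u \<in> {compose C a b | a b. a \<in> adj M ` y \<and> b \<in> adj M ` x}"
    then obtain a b where ab: "a \<in> x" "b \<in> y" and u: "u = compose C (adj M b) (adj M a)" by blast
    have "u = adj M (compose C a b)" using e[OF ab] u by simp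
    moreover have "compose C a b \<in> {compose C a b | a b. a \<in> x \<and> b \<in> y}" using ab by blast
    ultimately show "u \<in> adj M ` {compose C a b | a b. a \<in> x \<and> b \<in> y}" by blast
  qed
qed

lemma P_star_star: "x \<subseteq> L \<Longrightarrow> adj M ` adj M ` x = x"
proof -
  assume x: "x \<subseteq> L"
  have "\<And>a. a \<in> x \<Longrightarrow> adj M (adj M a) = a" using x by (intro adj_adj) (auto intro: LinI)
  thus ?thesis by (simp add: image_image)
qed

lemma P_iuq: "involutive_unital_quantale P"
  unfolding involutive_unital_quantale_def P_simps
proof (intro conjI ballI allI impI)
  show "complete_join_semilattice P" by (rule P_cjs)
  show "{idM M} \<in> Pow L" using L_id by simp
  fix x assume x: "x \<in> Pow L"
  show "{compose C a b |a b. a \<in> {idM M} \<and> b \<in> x} = x" using x P_unit_l by simp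
  show "{compose C a b |a b. a \<in> x \<and> b \<in> {idM M}} = x" using x P_unit_r by simp
  show "adj M ` x \<in> Pow L" using x L_adj by auto
  show "adj M ` adj M ` x = x" using x P_star_star by simp
  fix y assume y: "y \<in> Pow L"
  show "{compose C a b |a b. a \<in> x \<and> b \<in> y} \<in> Pow L" using x y mult_sub by simp
  show "adj M ` {compose C a b |a b. a \<in> x \<and> b \<in> y} = {compose C a b |a b. a \<in> adj M ` y \<and> b \<in> adj M ` x}"
    using x y P_star_mult by simp
  fix z assume z: "z \<in> Pow L"
  show "{compose C a b |a b. a \<in> {compose C a b |a b. a \<in> x \<and> b \<in> y} \<and> b \<in> z} =
        {compose C a b |a b. a \<in> x \<and> b \<in> {compose C a b |a b. a \<in> y \<and> b \<in> z}}"
    using x y z P_assoc by simp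
next
  fix x B assume "x \<in> Pow L" "B \<subseteq> Pow L"
  show "{compose C a b |a b. a \<in> x \<and> b \<in> \<Union>B} = \<Union>((\<lambda>b. {compose C a ba |a ba. a \<in> x \<and> ba \<in> b}) ` B)"
    by blast
  show "{compose C a b |a b. a \<in> \<Union>B \<and> b \<in> x} = \<Union>((\<lambda>b. {compose C a ba |a ba. a \<in> b \<and> ba \<in> x}) ` B)"
    by blast
next
  fix B assume "B \<subseteq> Pow L"
  show "adj M ` \<Union>B = \<Union>((`) (adj M) ` B)" by (rule image_Union)
qed


lemma pi_single_sub: "m \<in> C \<Longrightarrow> {pi_proj M m} \<subseteq> L" using L_pi by simp

lemma P_ida: "is_ida P"
  unfolding is_ida_def
proof (intro conjI ballI allI impI)
  show "involutive_unital_quantale P" by (rule P_iuq)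
  fix x assume x: "x \<in> kcar P"
  hence xL: "x \<subseteq> L" by simp
  show "kneg P x \<in> kcar P" using xL L_pi by simp
  show "kstar P (kneg P x) = kneg P x" using xL by (simp add: adj_pi_proj)
  fix y assume y: "y \<in> kcar P"
  hence yL: "y \<subseteq> L" by simp
  have "sig (kmult P x (kneg P (kneg P y))) = sig (kmult P x y)"
  proof -
    have "kneg P (kneg P y) = {pi_proj M (sig y)}" using negneg_P[OF yL] .
    hence "sig (kmult P x (kneg P (kneg P y))) = J ((\<lambda>a. a (sig {pi_proj M (sig y)})) ` x)"
      using sig_mult[OF xL pi_single_sub[OF sig_in[OF yL]]] by simp
    also have "\<dots> = J ((\<lambda>a. a (sig y)) ` x)" using sig_pi[OF sig_in[OF yL]] by simp
    also have "\<dots> = sig (kmult P x y)" using sig_mult[OF xL yL] by simp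
    finally show ?thesis .
  qed
  thus "kneg P (kmult P x (kneg P (kneg P y))) = kneg P (kmult P x y)" by simp
  let ?a = "sig x" and ?b = "sig y"
  have a: "?a \<in> C" and b: "?b \<in> C" using xL yL by auto
  have l1: "sig (kmult P (kneg P (kneg P x)) y) = pi ?a ?b"
  proof -
    have "sig (kmult P (kneg P (kneg P x)) y) = J ((\<lambda>f. f ?b) ` {pi_proj M ?a})"
      using sig_mult[OF pi_single_sub[OF a] yL] negneg_P[OF xL] by simp
    also have "\<dots> = pi ?a ?b" using a b by (simp add: J_single pi_proj_eq)
    finally show ?thesis .
  qed
  have lhs: "kneg P (kneg P (kmult P (kneg P (kneg P x)) y)) = {pi_proj M (pi ?a ?b)}"
    using negneg_P[OF mult_sub[OF pi_single_sub[OF a] yL]] negneg_P[OF xL] l1 by simp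
  have nx: "kneg P x = {pi_proj M (p ?a)}" by simp
  have s1: "sig (kjoin P {kneg P x, y}) = J {p ?a, ?b}"
    using sig_Un[OF pi_single_sub[of "p ?a"] yL] a sig_pi[of "p ?a"] by simp
  have n2: "kneg P (kjoin P {kneg P x, y}) = {pi_proj M (p (J {p ?a, ?b}))}"
    using s1 by simp
  have s2: "sig (kjoin P {kneg P x, kneg P (kjoin P {kneg P x, y})}) = J {p ?a, p (J {p ?a, ?b})}"
    unfolding n2 nx using sig_Un[OF pi_single_sub[of "p ?a"] pi_single_sub[of "p (J {p ?a, ?b})"]] a b s1
    by (simp add: sig_pi)
  have rhs: "kneg P (kjoin P {kneg P x, kneg P (kjoin P {kneg P x, y})}) = {pi_proj M (pi ?a ?b)}"
    using s2 a b by (simp add: key4)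
  show "kneg P (kneg P (kmult P (kneg P (kneg P x)) y)) =
        kneg P (kjoin P {kneg P x, kneg P (kjoin P {kneg P x, y})})"
    using lhs rhs by simp
next
  fix B assume B: "B \<subseteq> kcar P"
  hence B': "\<And>A. A \<in> B \<Longrightarrow> A \<subseteq> L" by auto
  have nn: "\<And>A. A \<in> B \<Longrightarrow> kneg P (kneg P A) \<subseteq> L" using B' negneg_P L_pi by simp
  have "sig (\<Union>((\<lambda>x. kneg P (kneg P x)) ` B)) = J (sig ` (\<lambda>x. kneg P (kneg P x)) ` B)"
    using sig_Union[of "(\<lambda>x. kneg P (kneg P x)) ` B"] nn by blast
  also have "sig ` (\<lambda>x. kneg P (kneg P x)) ` B = sig ` B"
    unfolding image_image
    apply (rule image_cong[OF HOL.refl])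
    using B' negneg_P sig_pi sig_in by simp
  also have "J (sig ` B) = sig (\<Union>B)" using sig_Union[of B] B' by simp
  finally have "sig (kjoin P ((\<lambda>x. kneg P (kneg P x)) ` B)) = sig (kjoin P B)" by simp
  thus "kneg P (kjoin P ((\<lambda>x. kneg P (kneg P x)) ` B)) = kneg P (kjoin P B)"
    by (simp only: P_simps(6))
qed

end

lemma oml_transfer:
  assumes oml: "complete_oml A le p" and bij: "bij_betw h A B"
    and ord: "\<And>x y. x \<in> A \<Longrightarrow> y \<in> A \<Longrightarrow> le' (h x) (h y) \<longleftrightarrow> le x y"
    and cp: "\<And>x. x \<in> A \<Longrightarrow> p' (h x) = h (p x)"
  shows "complete_oml B le' p'"
proof -
  interpret N: coml "\<lparr>ocar = A, ole = le, operp = p\<rparr>" using oml by unfold_locales simp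
  have Bh: "B = h ` A" using bij by (simp add: bij_betw_def)
  have inj: "inj_on h A" using bij by (simp add: bij_betw_def)
  have Jl: "\<And>X. X \<subseteq> A \<Longrightarrow> is_lub A le X (lsup A le X)" using N.J_lub by (simp add: ojoin_def)
  have Mg: "\<And>X. X \<subseteq> A \<Longrightarrow> is_glb A le X (linf A le X)" using N.Mt_glb by (simp add: omeet_def)
  have lu: "\<And>X s t. is_lub A le X s \<Longrightarrow> is_lub A le X t \<Longrightarrow> s = t" using N.lub_unique by simp
  have gu: "\<And>X s t. is_glb A le X s \<Longrightarrow> is_glb A le X t \<Longrightarrow> s = t" using N.glb_unique by simp
  have lub_tr: "\<And>X s. X \<subseteq> A \<Longrightarrow> s \<in> A \<Longrightarrow> is_lub B le' (h ` X) (h s) \<longleftrightarrow> is_lub A le X s"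
  proof -
    fix X s assume X: "X \<subseteq> A" and s: "s \<in> A"
    have "(\<forall>b\<in>h ` X. le' b (h s)) \<longleftrightarrow> (\<forall>b\<in>X. le b s)" using X s ord by (auto simp: ball_img subset_iff)
    moreover have "(\<forall>x\<in>B. (\<forall>b\<in>h ` X. le' b x) \<longrightarrow> le' (h s) x) \<longleftrightarrow> (\<forall>x\<in>A. (\<forall>b\<in>X. le b x) \<longrightarrow> le s x)"
      unfolding Bh ball_img using X s ord by (auto simp: subset_iff)
    moreover have "h s \<in> h ` A" using s by blast
    ultimately show "is_lub B le' (h ` X) (h s) \<longleftrightarrow> is_lub A le X s" unfolding is_lub_def Bh using s by (simp only:)
  qed
  have glb_tr: "\<And>X s. X \<subseteq> A \<Longrightarrow> s \<in> A \<Longrightarrow> is_glb B le' (h ` X) (h s) \<longleftrightarrow> is_glb A le X s"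
  proof -
    fix X s assume X: "X \<subseteq> A" and s: "s \<in> A"
    have "(\<forall>b\<in>h ` X. le' (h s) b) \<longleftrightarrow> (\<forall>b\<in>X. le s b)" using X s ord by (auto simp: ball_img subset_iff)
    moreover have "(\<forall>x\<in>B. (\<forall>b\<in>h ` X. le' x b) \<longrightarrow> le' x (h s)) \<longleftrightarrow> (\<forall>x\<in>A. (\<forall>b\<in>X. le x b) \<longrightarrow> le x s)"
      unfolding Bh ball_img using X s ord by (auto simp: subset_iff)
    moreover have "h s \<in> h ` A" using s by blast
    ultimately show "is_glb B le' (h ` X) (h s) \<longleftrightarrow> is_glb A le X s" unfolding is_glb_def Bh using s by (simp only:)
  qed
  have lsup_tr: "\<And>X. X \<subseteq> A \<Longrightarrow> lsup B le' (h ` X) = h (lsup A le X)"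
  proof -
    fix X assume X: "X \<subseteq> A"
    have s0: "lsup A le X \<in> A" using Jl[OF X] unfolding is_lub_def by blast
    have l: "is_lub B le' (h ` X) (h (lsup A le X))" using lub_tr[OF X s0] Jl[OF X] by simp
    have uq: "\<And>t. is_lub B le' (h ` X) t \<Longrightarrow> t = h (lsup A le X)"
    proof -
      fix t assume t: "is_lub B le' (h ` X) t"
      then obtain t' where t': "t' \<in> A" "t = h t'" unfolding is_lub_def Bh by blast
      hence "is_lub A le X t'" using lub_tr[OF X] t by simp
      thus "t = h (lsup A le X)" using lu Jl[OF X] t' by metis
    qed
    show "lsup B le' (h ` X) = h (lsup A le X)" unfolding lsup_def[of B le' "h ` X"] by (rule the_equality[where P="is_lub B le' (h ` X)", OF l uq])
  qed
  have linf_tr: "\<And>X. X \<subseteq> A \<Longrightarrow> linf B le' (h ` X) = h (linf A le X)"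
  proof -
    fix X assume X: "X \<subseteq> A"
    have s0: "linf A le X \<in> A" using Mg[OF X] unfolding is_glb_def by blast
    have l: "is_glb B le' (h ` X) (h (linf A le X))" using glb_tr[OF X s0] Mg[OF X] by simp
    have uq: "\<And>t. is_glb B le' (h ` X) t \<Longrightarrow> t = h (linf A le X)"
    proof -
      fix t assume t: "is_glb B le' (h ` X) t"
      then obtain t' where t': "t' \<in> A" "t = h t'" unfolding is_glb_def Bh by blast
      hence "is_glb A le X t'" using glb_tr[OF X] t by simp
      thus "t = h (linf A le X)" using gu Mg[OF X] t' by metis
    qed
    show "linf B le' (h ` X) = h (linf A le X)" unfolding linf_def[of B le' "h ` X"] by (rule the_equality[where P="is_glb B le' (h ` X)", OF l uq])
  qed
  have A7: "\<forall>x\<in>A. linf A le {x, p x} = lsup A le {} \<and> lsup A le {x, p x} = lsup A le A"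
    using oml[unfolded complete_oml_def, THEN conjunct2, THEN conjunct2, THEN conjunct2,
     THEN conjunct2, THEN conjunct2, THEN conjunct2, THEN conjunct1] .
  have A8: "\<forall>x\<in>A. \<forall>y\<in>A. le x y \<longrightarrow> y = lsup A le {x, linf A le {y, p x}}"
    using oml[unfolded complete_oml_def, THEN conjunct2, THEN conjunct2, THEN conjunct2,
     THEN conjunct2, THEN conjunct2, THEN conjunct2, THEN conjunct2] .
  have pA: "\<And>x. x \<in> A \<Longrightarrow> p x \<in> A" using N.p_in by simp
  show ?thesis unfolding complete_oml_def
  proof (intro conjI)
    show "\<forall>x\<in>B. le' x x" unfolding Bh ball_img
    proof
      fix x assume x: "x \<in> A"
      have "le x x" using N.refl x by simp
      thus "le' (h x) (h x)" using ord x by simp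
    qed
    show "\<forall>x\<in>B. \<forall>y\<in>B. le' x y \<and> le' y x \<longrightarrow> x = y" unfolding Bh ball_img
    proof (intro ballI impI)
      have as: "\<And>x y. x \<in> A \<Longrightarrow> y \<in> A \<Longrightarrow> le x y \<Longrightarrow> le y x \<Longrightarrow> x = y" using N.antisym by simp
      fix x y assume "x \<in> A" "y \<in> A" "le' (h x) (h y) \<and> le' (h y) (h x)"
      thus "h x = h y" using ord as by metis
    qed
    show "\<forall>x\<in>B. \<forall>y\<in>B. \<forall>z\<in>B. le' x y \<and> le' y z \<longrightarrow> le' x z" unfolding Bh ball_img
    proof (intro ballI impI)
      have tr: "\<And>x y z. x \<in> A \<Longrightarrow> y \<in> A \<Longrightarrow> z \<in> A \<Longrightarrow> le x y \<Longrightarrow> le y z \<Longrightarrow> le x z"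
        by (rule N.trans[simplified])
      fix x y z assume xyz: "x \<in> A" "y \<in> A" "z \<in> A" and "le' (h x) (h y) \<and> le' (h y) (h z)"
      hence "le x y" "le y z" using ord by auto
      hence "le x z" using tr xyz by blast
      thus "le' (h x) (h z)" using ord xyz by simp
    qed
    show "\<forall>Y. Y \<subseteq> B \<longrightarrow> (\<exists>s. is_lub B le' Y s)"
    proof (intro allI impI)
      fix Y assume Y: "Y \<subseteq> B"
      let ?X = "{x\<in>A. h x \<in> Y}"
      have YX: "Y = h ` ?X" using Y Bh by blast
      have X: "?X \<subseteq> A" by blast
      have s0: "lsup A le ?X \<in> A" using Jl[OF X] unfolding is_lub_def by blast
      have "is_lub B le' (h ` ?X) (h (lsup A le ?X))"
        using lub_tr[OF X s0] Jl[OF X] by simp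
      thus "\<exists>s. is_lub B le' Y s" using YX by metis
    qed
    show "\<forall>x\<in>B. p' x \<in> B \<and> p' (p' x) = x" unfolding Bh ball_img
    proof
      fix x assume x: "x \<in> A"
      have "p (p x) = x" using N.pp x by simp
      thus "p' (h x) \<in> h ` A \<and> p' (p' (h x)) = h x" using cp pA x by simp
    qed
    show "\<forall>x\<in>B. \<forall>y\<in>B. le' x y \<longrightarrow> le' (p' y) (p' x)" unfolding Bh ball_img
    proof (intro ballI impI)
      have an: "\<And>x y. x \<in> A \<Longrightarrow> y \<in> A \<Longrightarrow> le x y \<Longrightarrow> le (p y) (p x)" using N.p_anti by simp
      fix x y assume xy: "x \<in> A" "y \<in> A" and "le' (h x) (h y)"
      hence "le x y" using ord by simp
      hence "le (p y) (p x)" using an xy by blast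
      thus "le' (p' (h y)) (p' (h x))" using ord xy cp pA by simp
    qed
    show "\<forall>x\<in>B. linf B le' {x, p' x} = lsup B le' {} \<and> lsup B le' {x, p' x} = lsup B le' B"
      unfolding Bh ball_img
    proof
      fix x assume x: "x \<in> A"
      have e: "{h x, p' (h x)} = h ` {x, p x}" using cp x by simp
      have s: "{x, p x} \<subseteq> A" using x pA by simp
      have f1: "linf (h ` A) le' (h ` {x, p x}) = h (linf A le {x, p x})" using linf_tr[OF s] unfolding Bh .
      have f2: "lsup (h ` A) le' (h ` {x, p x}) = h (lsup A le {x, p x})" using lsup_tr[OF s] unfolding Bh .
      have f3: "lsup (h ` A) le' {} = h (lsup A le {})" using lsup_tr[of "{}"] unfolding Bh by simp
      have f4: "lsup (h ` A) le' (h ` A) = h (lsup A le A)" using lsup_tr[of A] unfolding Bh by simp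
      show "linf (h ` A) le' {h x, p' (h x)} = lsup (h ` A) le' {} \<and>
            lsup (h ` A) le' {h x, p' (h x)} = lsup (h ` A) le' (h ` A)"
        unfolding e f1 f2 f3 f4 using A7 x by simp
    qed
    show "\<forall>x\<in>B. \<forall>y\<in>B. le' x y \<longrightarrow> y = lsup B le' {x, linf B le' {y, p' x}}"
      unfolding Bh ball_img
    proof (intro ballI impI)
      fix x y assume x: "x \<in> A" and y: "y \<in> A" and l: "le' (h x) (h y)"
      have l': "le x y" using l ord x y by simp
      have m: "linf A le {y, p x} \<in> A" using Mg[of "{y, p x}"] x y pA unfolding is_glb_def by simp
      have "lsup (h ` A) le' {h x, linf (h ` A) le' {h y, p' (h x)}}
          = lsup (h ` A) le' {h x, linf (h ` A) le' (h ` {y, p x})}" using cp x by simp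
      also have "\<dots> = lsup (h ` A) le' (h ` {x, linf A le {y, p x}})"
      proof -
        have "linf B le' (h ` {y, p x}) = h (linf A le {y, p x})" using linf_tr[of "{y, p x}"] x y pA by simp
        thus ?thesis unfolding Bh by (simp only: image_insert image_empty)
      qed
      also have "\<dots> = h (lsup A le {x, linf A le {y, p x}})"
        using lsup_tr[of "{x, linf A le {y, p x}}"] x m Bh by simp
      also have "\<dots> = h y" using A8 x y l' by simp
      finally show "h y = lsup (h ` A) le' {h x, linf (h ` A) le' {h y, p' (h x)}}" by simp
    qed
  qed
qed


context psetL
begin

lemma tests_P: "tests P = (\<lambda>m. {pi_proj M m}) ` C"
proof (intro set_eqI iffI)
  fix w assume "w \<in> tests P"
  then obtain A where A: "A \<subseteq> L" and w: "w = kneg P A" unfolding tests_def by auto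
  show "w \<in> (\<lambda>m. {pi_proj M m}) ` C" using w A by simp
next
  fix w assume "w \<in> (\<lambda>m. {pi_proj M m}) ` C"
  then obtain m where m: "m \<in> C" and w: "w = {pi_proj M m}" by blast
  have "kneg P {pi_proj M (p m)} = w" using m w by (simp add: sig_pi)
  moreover have "{pi_proj M (p m)} \<in> kcar P" using m L_pi by simp
  ultimately show "w \<in> tests P" unfolding tests_def by blast
qed

lemma tle_P: "a \<in> C \<Longrightarrow> b \<in> C \<Longrightarrow> tle P {pi_proj M a} {pi_proj M b} \<longleftrightarrow> le a b"
proof -
  assume a: "a \<in> C" and b: "b \<in> C"
  have u: "kjoin P {{pi_proj M a}, {pi_proj M b}} = {pi_proj M a} \<union> {pi_proj M b}" by simp
  have sg: "sig ({pi_proj M a} \<union> {pi_proj M b}) = J {a, b}"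
    using sig_Un[OF pi_single_sub[OF a] pi_single_sub[OF b]] a b by (simp add: sig_pi)
  have "tle P {pi_proj M a} {pi_proj M b} \<longleftrightarrow> {pi_proj M (J {a, b})} = {pi_proj M b}"
    unfolding tle_def u using negneg_P[of "{pi_proj M a} \<union> {pi_proj M b}"] sg a b L_pi by simp
  also have "\<dots> \<longleftrightarrow> J {a, b} = b" using pi_proj_inj a b by auto
  also have "\<dots> \<longleftrightarrow> le a b" using J2_eq_iff a b by simp
  finally show ?thesis .
qed

lemma neg_P_single: "a \<in> C \<Longrightarrow> kneg P {pi_proj M a} = {pi_proj M (p a)}"
  by (simp add: sig_pi)

lemma P_oml: "complete_oml (tests P) (tle P) (kneg P)"
proof (rule oml_transfer[where h = "\<lambda>m. {pi_proj M m}"])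
  show "complete_oml C le p" using oml .
  show "bij_betw (\<lambda>m. {pi_proj M m}) C (tests P)"
    unfolding bij_betw_def tests_P by (auto simp: inj_on_def intro: pi_proj_inj)
  show "\<And>x y. x \<in> C \<Longrightarrow> y \<in> C \<Longrightarrow> tle P {pi_proj M x} {pi_proj M y} \<longleftrightarrow> le x y" by (rule tle_P)
  show "\<And>x. x \<in> C \<Longrightarrow> kneg P {pi_proj M x} = {pi_proj M (p x)}" by (rule neg_P_single)
qed

lemma bullet_single: "f \<in> L \<Longrightarrow> m \<in> C \<Longrightarrow> bullet P {f} {pi_proj M m} = {pi_proj M (f m)}"
proof -
  assume f: "f \<in> L" and m: "m \<in> C"
  have fs: "{f} \<subseteq> L" using f by simp
  have "sig (kmult P {f} {pi_proj M m}) = J ((\<lambda>a. a (sig {pi_proj M m})) ` {f})"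
    using sig_mult[OF fs pi_single_sub[OF m]] by simp
  also have "\<dots> = f m" using sig_pi[OF m] Lfun[OF f m] by (simp add: J_single)
  finally have "sig (kmult P {f} {pi_proj M m}) = f m" .
  moreover have "kmult P {f} {pi_proj M m} \<subseteq> L" using mult_sub[OF fs pi_single_sub[OF m]] by simp
  ultimately show ?thesis unfolding bullet_def using negneg_P Lfun[OF f m] by (simp add: sig_pi)
qed

end

lemma singles_Union: "S \<subseteq> (\<lambda>f. {f}) ` X \<Longrightarrow> S = (\<lambda>f. {f}) ` (\<Union>S)"
  by blast

theorem lemma5p1:
  fixes Ta :: "('m \<Rightarrow> 'm) ida \<Rightarrow> ('m \<Rightarrow> 'm) set"
    and Tb :: "('m \<Rightarrow> 'm) set ida \<Rightarrow> ('m \<Rightarrow> 'm) set set"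
    and M :: "'m ortho"
  assumes T1a: "T1 Ta" and T1b: "T1 Tb"
    and T3: "T3 Ta Tb"
    and T4aa: "T4 Ta Ta" and T4ab: "T4 Ta Tb" and T4ba: "T4 Tb Ta" and T4bb: "T4 Tb Tb"
    and M: "is_complete_oml M"
  shows "T_based_oda Tb (pset_ida M (Ta (lin_ida M)))"
proof -
  interpret coml M using M by unfold_locales
  define L where "L = Ta (lin_ida M)"
  have li: "is_ida (lin_ida M)" by (rule lin_ida)
  have tL: "tests (lin_ida M) \<subseteq> L" and sm: "inv_submonoid (lin_ida M) L"
    using T1a li unfolding T1_def L_def by auto
  have piL: "\<And>m. m \<in> C \<Longrightarrow> pi_proj M m \<in> L"
  proof -
    fix m assume m: "m \<in> C"
    have "kneg (lin_ida M) (pi_proj M (p m)) = pi_proj M m" using m by (simp add: pi_proj_top)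
    moreover have "pi_proj M (p m) \<in> kcar (lin_ida M)" using m by (simp add: pi_proj_Lin)
    ultimately have "pi_proj M m \<in> tests (lin_ida M)" unfolding tests_def by (metis image_eqI)
    thus "pi_proj M m \<in> L" using tL by blast
  qed
  interpret psetL M L
    apply unfold_locales
    using sm piL unfolding inv_submonoid_def by auto
  have iso: "im_iso (lin_ida M) L P (Tb P) (\<lambda>f. {f})"
    using T3 M unfolding T3_def L_def by blast
  hence TbP: "Tb P = (\<lambda>f. {f}) ` L" unfolding im_iso_def bij_betw_def by auto
  show ?thesis
    unfolding T_based_oda_def L_def[symmetric]
  proof (intro conjI allI impI ballI)
    show "is_ida P" by (rule P_ida)
    show "complete_oml (tests P) (tle P) (kneg P)" by (rule P_oml)
  next
    fix A assume h: "Tb P \<subseteq> A \<and> A \<subseteq> kcar P \<and>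
          (\<forall>x\<in>A. \<forall>y\<in>A. kmult P x y \<in> A) \<and> (\<forall>x\<in>A. kstar P x \<in> A) \<and>
          (\<forall>B. B \<subseteq> A \<longrightarrow> kjoin P B \<in> A)"
    have h1: "Tb P \<subseteq> A" using h[THEN conjunct1] .
    have h2: "A \<subseteq> kcar P" using h[THEN conjunct2, THEN conjunct1] .
    have h5: "\<forall>B. B \<subseteq> A \<longrightarrow> kjoin P B \<in> A" using h[THEN conjunct2, THEN conjunct2, THEN conjunct2, THEN conjunct2] .
    show "A = kcar P"
    proof
      show "A \<subseteq> kcar P" using h2 .
      show "kcar P \<subseteq> A"
      proof
        fix X assume "X \<in> kcar P"
        hence X: "X \<subseteq> L" by simp
        have "(\<lambda>f. {f}) ` X \<subseteq> Tb P" using X TbP by auto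
        hence sub: "(\<lambda>f. {f}) ` X \<subseteq> A" using h1 by (rule subset_trans)
        have "kjoin P ((\<lambda>f. {f}) ` X) \<in> A" using h5 sub by blast
        hence "\<Union>((\<lambda>f. {f}) ` X) \<in> A" by simp
        moreover have "\<Union>((\<lambda>f. {f}) ` X) = X" by blast
        ultimately show "X \<in> A" by simp
      qed
    qed
  next
    fix S U assume h: "S \<subseteq> Tb P \<and> U \<subseteq> Tb P"
    have "S = (\<lambda>f. {f}) ` (\<Union>S)" "U = (\<lambda>f. {f}) ` (\<Union>U)"
      using singles_Union[of S L] singles_Union[of U L] h TbP by simp_all
    thus "kjoin P S = kjoin P U \<longleftrightarrow> S = U" by auto
  next
    fix s t assume s: "s \<in> Tb P" and t: "t \<in> Tb P"
    obtain f where f: "f \<in> L" "s = {f}" using s TbP by blast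
    obtain g where g: "g \<in> L" "t = {g}" using t TbP by blast
    show "s = t \<longleftrightarrow> kequiv P s t"
    proof
      assume "s = t" thus "kequiv P s t" unfolding kequiv_def by simp
    next
      assume e: "kequiv P s t"
      have "f = g"
      proof (rule ext_eqI)
        show "f \<in> C \<rightarrow>\<^sub>E C" "g \<in> C \<rightarrow>\<^sub>E C" using f g LinI Lin_PiE by auto
        fix m assume m: "m \<in> C"
        have "{pi_proj M m} \<in> tests P" using m tests_P by blast
        hence "bullet P s {pi_proj M m} = bullet P t {pi_proj M m}" using e unfolding kequiv_def by blast
        hence "pi_proj M (f m) = pi_proj M (g m)" using bullet_single f g m by simp
        thus "f m = g m" using pi_proj_inj Lfun f g m by blast
      qed
      thus "s = t" using f g by simp
    qed
  qed
qed

end
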